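(* Let $r\ge2$ be an integer, $m,\ell$ positive integers with $r<2^m$, let $\alpha_0\neq0$ be a real number with $\alpha_0\in(-r/2,r/2]$, and let $B$ be an integer with $1\le B<B_{\max}=(2^{m+\ell}/r-1)/2$. Then $$\sum_{t=-B}^{B}P(\alpha_0+rt)=\frac1r(1-\epsilon_R)+\epsilon_A$$ where $$0\le\epsilon_R\le\frac{1}{\pi^2}\left(\frac{2}{B}+\frac{1}{B^2}+\frac{1}{3B^3}\right)\quad\text{and}\quad|\epsilon_A|\le(2B+1)\tilde\epsilon,\qquad \tilde\epsilon=\frac{\pi^2}{2^{m+\ell}}\left(\frac34+\frac{r}{2^{m+\ell}}\cdot\frac1{12}\right).$$
   Context: Let $\beta=2^{m+\ell}\bmod r$ and $L=\lfloor 2^{m+\ell}/r\rfloor$. For real $\alpha$ not a multiple of $2^{m+\ell}$, $$P(\alpha)=\frac{\beta}{2^{2(m+\ell)}}\cdot\frac{1-\cos(2\pi\alpha(L+1)/2^{m+\ell})}{1-\cos(2\pi\alpha/2^{m+\ell})}+\frac{r-\beta}{2^{2(m+\ell)}}\cdot\frac{1-\cos(2\pi\alpha L/2^{m+\ell})}{1-\cos(2\pi\alpha/2^{m+\ell})}.$$ *)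

theory Defs
  imports Complex_Main
begin

definition qpe_beta :: "nat \<Rightarrow> nat \<Rightarrow> nat \<Rightarrow> nat" where
  "qpe_beta r m l = 2 ^ (m + l) mod r"

definition qpe_L :: "nat \<Rightarrow> nat \<Rightarrow> nat \<Rightarrow> nat" where
  "qpe_L r m l = 2 ^ (m + l) div r"

definition qpe_P :: "nat \<Rightarrow> nat \<Rightarrow> nat \<Rightarrow> real \<Rightarrow> real" where
  "qpe_P r m l \<alpha> =
     (let N = (2::real) ^ (m + l); \<beta> = real (qpe_beta r m l); L = real (qpe_L r m l) in
      \<beta> / N\<^sup>2 * ((1 - cos (2 * pi * \<alpha> * (L + 1) / N)) / (1 - cos (2 * pi * \<alpha> / N)))
      + (real r - \<beta>) / N\<^sup>2 * ((1 - cos (2 * pi * \<alpha> * L / N)) / (1 - cos (2 * pi * \<alpha> / N))))"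

end

theory Submission
  imports Defs "HOL-Analysis.Analysis" "HOL-Real_Asymp.Real_Asymp"
begin

lemma deriv_eq_open:
  fixes f g :: "real \<Rightarrow> real"
  assumes "open S" "x \<in> S" "\<And>y. y \<in> S \<Longrightarrow> f y = g y"
    "(f has_field_derivative f') (at x)" "(g has_field_derivative g') (at x)"
  shows "f' = g'"
proof -
  have "(g has_field_derivative f') (at x)"
    by (rule has_field_derivative_transform_within_open[OF assms(4) assms(1,2)]) (use assms(3) in auto)
  thus ?thesis using assms(5) DERIV_unique by blast
qed

lemma Gamma_reflection_real:
  fixes x :: real assumes "x \<notin> \<int>"
  shows "Gamma x * Gamma (1 - x) = pi / sin (pi * x)"
proof -
  have "complex_of_real (Gamma x * Gamma (1 - x)) = Gamma (complex_of_real x) * Gamma (complex_of_real (1 - x))"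
    by (simp only: of_real_mult Gamma_complex_of_real)
  also have "\<dots> = Gamma (complex_of_real x) * Gamma (1 - complex_of_real x)" by (simp only: of_real_diff of_real_1)
  also have "\<dots> = of_real pi / sin (of_real pi * of_real x)" by (rule Gamma_reflection_complex)
  also have "\<dots> = complex_of_real (pi / sin (pi * x))" by (simp only: of_real_mult[symmetric] sin_of_real of_real_divide)
  finally show ?thesis by (simp only: of_real_eq_iff)
qed

lemma notint: fixes y :: real assumes "0<y" "y<1" shows "y \<notin> \<int>" "y \<notin> \<int>\<^sub>\<le>\<^sub>0" "1 - y \<notin> \<int>\<^sub>\<le>\<^sub>0" "sin (pi*y) > 0"
proof -
  show "y \<notin> \<int>"
  proof
    assume "y \<in> \<int>" then obtain k where "y = of_int k" by (auto elim: Ints_cases)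
    with assms show False by simp
  qed
  then show "y \<notin> \<int>\<^sub>\<le>\<^sub>0" using nonpos_Ints_subset_Ints by blast
  show "1 - y \<notin> \<int>\<^sub>\<le>\<^sub>0"
  proof
    assume "1 - y \<in> \<int>\<^sub>\<le>\<^sub>0" then obtain k where "1 - y = of_int k" "k \<le> 0" by (auto elim: nonpos_Ints_cases)
    with assms show False by simp
  qed
  show "sin (pi*y) > 0" using assms by (intro sin_gt_zero) auto
qed

lemma digamma_reflect:
  fixes y :: real assumes "0<y" "y<1"
  shows "Digamma y - Digamma (1 - y) = - pi * cos (pi*y) / sin (pi*y)"
proof -
  note n = notint[OF assms]
  have "Gamma y * Gamma (1 - y) * (Digamma y - Digamma (1 - y)) = - pi * (pi * cos (pi*y)) / (sin (pi*y))^2"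
  proof (rule deriv_eq_open[of "{0<..<1}" y "\<lambda>x. Gamma x * Gamma (1 - x)" "\<lambda>x. pi / sin (pi * x)"])
    show "Gamma z * Gamma (1 - z) = pi / sin (pi * z)" if "z \<in> {0<..<1}" for z
      using that notint[of z] by (intro Gamma_reflection_real) auto
    show "((\<lambda>x. Gamma x * Gamma (1 - x)) has_field_derivative Gamma y * Gamma (1 - y) * (Digamma y - Digamma (1 - y))) (at y)"
      using n by (auto intro!: derivative_eq_intros simp: algebra_simps)
    show "((\<lambda>x. pi / sin (pi * x)) has_field_derivative - pi * (pi * cos (pi*y)) / (sin (pi*y))^2) (at y)"
      using n by (auto intro!: derivative_eq_intros simp: power2_eq_square)
  qed (use assms in auto)
  then have "(pi / sin (pi*y)) * (Digamma y - Digamma (1 - y)) = (pi / sin (pi*y)) * (- pi * cos (pi*y) / sin (pi*y))"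
    using n Gamma_reflection_real[OF n(1)] by (simp add: power2_eq_square)
  then show ?thesis using n by (subst (asm) mult_left_cancel) auto
qed

lemma aux_csc: fixes s c p :: real assumes "s \<noteq> 0" "s * s + c * c = 1"
  shows "- ((- (s * p * p * s) - p * c * (c * p)) / (s * s)) = p^2 / s^2"
proof -
  have "- ((- (s * p * p * s) - p * c * (c * p)) / (s * s)) = (p * p * (s * s + c * c)) / (s * s)"
    by (simp add: algebra_simps diff_divide_distrib add_divide_distrib)
  also have "\<dots> = p^2 / s^2" using assms(2) by (simp add: power2_eq_square)
  finally show ?thesis .
qed

lemma psi1_reflect:
  fixes y :: real assumes "0<y" "y<1"
  shows "Polygamma 1 y + Polygamma 1 (1 - y) = pi^2 / (sin (pi*y))^2"
proof (rule deriv_eq_open[of "{0<..<1}" y "\<lambda>x. Digamma x - Digamma (1 - x)" "\<lambda>x. - pi * cos (pi*x) / sin (pi*x)"])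
  note n = notint[OF assms]
  show "Digamma z - Digamma (1 - z) = - pi * cos (pi*z) / sin (pi*z)" if "z \<in> {0<..<1}" for z
    using that by (intro digamma_reflect) auto
  show "((\<lambda>x. Digamma x - Digamma (1 - x)) has_field_derivative Polygamma 1 y + Polygamma 1 (1 - y)) (at y)"
    using n by (auto intro!: derivative_eq_intros)
  have "sin (pi*y)^2 + cos (pi*y)^2 = 1" by simp
  then show "((\<lambda>x. - pi * cos (pi*x) / sin (pi*x)) has_field_derivative pi^2 / (sin (pi*y))^2) (at y)"
  proof -
    have e: "sin (pi*y) * sin (pi*y) + cos (pi*y) * cos (pi*y) = 1"
      using sin_cos_squared_add[of "pi*y"] by (simp add: power2_eq_square)
    show ?thesis
      using n apply (auto intro!: derivative_eq_intros)
      using aux_csc[OF _ e] by simp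
  qed
qed (use assms in auto)

lemma psi1_sums: fixes y :: real assumes "0 < y" shows "(\<lambda>k. 1 / (y + real k)^2) sums Polygamma 1 y"
  using Polygamma_LIMSEQ[of y 1] assms by (simp add: inverse_eq_divide power2_eq_square)

lemma finite_sum_eq: fixes x :: real
  shows "(\<Sum>t = -int n..int n. 1 / (x + of_int t)^2) = (\<Sum>k\<le>n. 1 / (x + real k)^2) + (\<Sum>k<n. 1 / (1 - x + real k)^2)"
proof (induction n)
  case 0 then show ?case by simp
next
  case (Suc n)
  have set: "{-int (Suc n)..int (Suc n)} = insert (-int n - 1) (insert (int n + 1) {-int n..int n})" by auto
  have "(\<Sum>t = -int (Suc n)..int (Suc n). 1 / (x + of_int t)^2)
      = 1 / (x + of_int (-int n - 1))^2 + (1 / (x + of_int (int n + 1))^2 + (\<Sum>t = -int n..int n. 1 / (x + of_int t)^2))"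
    unfolding set by (subst sum.insert; simp)+
  also have "(x + of_int (-int n - 1))^2 = (1 - x + real n)^2" by (simp add: power2_eq_square algebra_simps)
  also have "x + of_int (int n + 1) = x + real (Suc n)" by simp
  finally show ?case using Suc by (simp; metis add.commute)
qed

lemma upper_bound: fixes y :: real assumes "0 < y" "y < 1"
  shows "(\<Sum>t = -int n..int n. 1 / (y + of_int t)^2) \<le> pi^2 / (sin (pi*y))^2"
proof -
  have s1: "(\<lambda>k. 1 / (y + real k)^2) sums Polygamma 1 y" using psi1_sums assms by simp
  have s2: "(\<lambda>k. 1 / (1 - y + real k)^2) sums Polygamma 1 (1 - y)" using psi1_sums assms by simp
  have "(\<Sum>k\<le>n. 1 / (y + real k)^2) \<le> Polygamma 1 y"
    using sum_le_suminf[OF sums_summable[OF s1], of "{..n}"] sums_unique[OF s1] by auto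
  moreover have "(\<Sum>k<n. 1 / (1 - y + real k)^2) \<le> Polygamma 1 (1 - y)"
    using sum_le_suminf[OF sums_summable[OF s2], of "{..<n}"] sums_unique[OF s2] by auto
  ultimately show ?thesis using finite_sum_eq[of y n] psi1_reflect[OF assms] by simp
qed

lemma tele: fixes n :: nat assumes "n \<ge> 1"
  shows "(\<lambda>k. 1 / (real k + n) - 1 / (real (Suc k) + n)) sums (1 / real n)"
proof -
  have "(\<lambda>k. 1 / (real k + n)) \<longlonglongrightarrow> 0" by real_asymp
  from telescope_sums'[OF this] show ?thesis by simp
qed

lemma lower_bound: fixes y :: real assumes "0 < y" "y \<le> 1/2" "n \<ge> 1"
  shows "pi^2 / (sin (pi*y))^2 - (\<Sum>t = -int n..int n. 1 / (y + of_int t)^2) \<le> 2 / real n"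
proof -
  have y1: "y < 1" using assms by simp
  define f where "f k = 1 / (y + real k)^2" for k :: nat
  define g where "g k = 1 / (1 - y + real k)^2" for k :: nat
  define h where "h k = 1 / (real k + n) - 1 / (real (Suc k) + n)" for k :: nat
  have s1: "f sums Polygamma 1 y" using psi1_sums assms unfolding f_def by simp
  have s2: "g sums Polygamma 1 (1 - y)" using psi1_sums assms y1 unfolding g_def by simp
  have sh: "h sums (1 / real n)" using tele[OF assms(3)] unfolding h_def by simp
  have hk: "h k = 1 / ((real k + n) * (real k + n + 1))" for k
    using assms(3) unfolding h_def by (simp add: field_simps)
  have pos: "(real k + n) * (real k + n + 1) > 0" for k using assms(3) by simp
  have fle: "f (k + Suc n) \<le> h k" for k
  proof -
    have "(real k + n) * (real k + n + 1) \<le> (y + real (k + Suc n))^2"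
      using assms by (simp add: power2_eq_square algebra_simps)
    then show ?thesis unfolding f_def hk using pos[of k] assms
      by (intro divide_left_mono mult_pos_pos) auto
  qed
  have gle: "g (k + n) \<le> h k" for k
  proof -
    have "(real k + n) * (real k + n + 1) \<le> (1 - y + real (k + n))^2"
    proof -
      have a: "1 - y + real (k + n) \<ge> real k + n + 1/2" using assms by simp
      have "(real k + n) * (real k + n + 1) \<le> (real k + n + 1/2)^2" by (simp add: power2_eq_square algebra_simps)
      also have "\<dots> \<le> (1 - y + real (k + n))^2" using a by (intro power_mono) auto
      finally show ?thesis .
    qed
    then show ?thesis unfolding g_def hk using pos[of k] assms
      by (intro divide_left_mono mult_pos_pos) auto
  qed
  have sf: "summable (\<lambda>k. f (k + Suc n))" by (rule summable_ignore_initial_segment[OF sums_summable[OF s1]])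
  have sg: "summable (\<lambda>k. g (k + n))" by (rule summable_ignore_initial_segment[OF sums_summable[OF s2]])
  have t1: "(\<Sum>k. f (k + Suc n)) \<le> 1 / real n"
    using suminf_le[of "\<lambda>k. f (k + Suc n)" h, OF fle sf sums_summable[OF sh]] sums_unique[OF sh] by simp
  have t2: "(\<Sum>k. g (k + n)) \<le> 1 / real n"
    using suminf_le[of "\<lambda>k. g (k + n)" h, OF gle sg sums_summable[OF sh]] sums_unique[OF sh] by simp
  have e1: "Polygamma 1 y = (\<Sum>k. f (k + Suc n)) + sum f {..<Suc n}"
    using suminf_split_initial_segment[OF sums_summable[OF s1], of "Suc n"] sums_unique[OF s1] by simp
  have e2: "Polygamma 1 (1 - y) = (\<Sum>k. g (k + n)) + sum g {..<n}"
    using suminf_split_initial_segment[OF sums_summable[OF s2], of n] sums_unique[OF s2] by simp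
  have fs: "(\<Sum>t = -int n..int n. 1 / (y + of_int t)^2) = sum f {..<Suc n} + sum g {..<n}"
    using finite_sum_eq[of y n] unfolding f_def g_def lessThan_Suc_atMost by simp
  have "pi^2 / (sin (pi*y))^2 = Polygamma 1 y + Polygamma 1 (1 - y)"
    using psi1_reflect[OF assms(1) y1] by simp
  then show ?thesis using fs e1 e2 t1 t2 by linarith
qed

lemma core:
  fixes D E1 E2 s2 r \<beta> N a2 :: real
  assumes E1: "\<bar>E1\<bar> \<le> 3 * a2 * (r - \<beta>) / (r^2 * N)"
    and E2: "\<bar>E2\<bar> \<le> 3 * a2 * \<beta> / (r^2 * N)"
    and D1: "D \<ge> a2 / 3" and D2: "a2 - D \<le> a2^2 / (3 * N^2)" and D3: "D \<le> a2"
    and s: "0 \<le> s2" "s2 \<le> 1" and b: "0 \<le> \<beta>" "\<beta> \<le> r" and rN: "0 < r" "r \<le> N" and a: "a2 > 0"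
  shows "\<bar>(\<beta> * (s2 + E1) + (r - \<beta>) * (s2 + E2)) / D - r * s2 / a2\<bar> \<le> 11 / (2 * N)"
proof -
  have Dp: "D > 0" using D1 a by linarith
  have Np: "N > 0" using rN by linarith
  have eq: "(\<beta> * (s2 + E1) + (r - \<beta>) * (s2 + E2)) / D - r * s2 / a2
      = (\<beta> * E1 + (r - \<beta>) * E2) / D + r * s2 * (a2 - D) / (D * a2)"
    using Dp a by (simp add: field_simps)
  have num: "\<bar>\<beta> * E1 + (r - \<beta>) * E2\<bar> \<le> 3 / 2 * a2 / N"
  proof -
    have "\<bar>\<beta> * E1 + (r - \<beta>) * E2\<bar> \<le> \<beta> * \<bar>E1\<bar> + (r - \<beta>) * \<bar>E2\<bar>"
    proof -
      have "\<bar>\<beta> * E1\<bar> = \<beta> * \<bar>E1\<bar>" "\<bar>(r - \<beta>) * E2\<bar> = (r - \<beta>) * \<bar>E2\<bar>" using b by (simp_all add: abs_mult)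
      then show ?thesis using abs_triangle_ineq[of "\<beta> * E1" "(r - \<beta>) * E2"] by linarith
    qed
    also have "\<dots> \<le> \<beta> * (3 * a2 * (r - \<beta>) / (r^2 * N)) + (r - \<beta>) * (3 * a2 * \<beta> / (r^2 * N))"
      using b E1 E2 by (intro add_mono mult_left_mono) auto
    also have "\<dots> = 6 * a2 / N * (\<beta> * (r - \<beta>) / r^2)" using rN by (simp add: field_simps)
    also have "\<dots> \<le> 6 * a2 / N * (1/4)"
    proof (intro mult_left_mono)
      have sq: "0 \<le> (r - 2 * \<beta>)^2" by simp
      have "\<beta> * (r - \<beta>) * 4 \<le> r^2" using sq by (simp add: power2_eq_square algebra_simps)
      then show "\<beta> * (r - \<beta>) / r^2 \<le> 1/4" using rN by (simp add: field_simps)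
    qed (use a Np in auto)
    finally show ?thesis by simp
  qed
  have t1: "\<bar>(\<beta> * E1 + (r - \<beta>) * E2) / D\<bar> \<le> 9 / (2 * N)"
  proof -
    have "\<bar>(\<beta> * E1 + (r - \<beta>) * E2) / D\<bar> = \<bar>\<beta> * E1 + (r - \<beta>) * E2\<bar> / D" using Dp by simp
    also have "\<dots> \<le> (3 / 2 * a2 / N) / (a2 / 3)"
      using num D1 a Dp Np by (intro frac_le) auto
    also have "\<dots> = 9 / (2 * N)" using a by (simp add: field_simps)
    finally show ?thesis .
  qed
  have t2: "\<bar>r * s2 * (a2 - D) / (D * a2)\<bar> \<le> 1 / N"
  proof -
    have nn: "0 \<le> a2 - D" using D3 by simp
    have "\<bar>r * s2 * (a2 - D) / (D * a2)\<bar> = r * s2 * (a2 - D) / (D * a2)"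
      using nn rN s Dp a by simp
    also have "\<dots> \<le> r * 1 * (a2^2 / (3 * N^2)) / ((a2 / 3) * a2)"
      using nn rN s Dp a D1 D2 by (intro frac_le mult_mono mult_right_mono) auto
    also have "\<dots> = r / N^2" using a by (simp add: field_simps power2_eq_square)
    also have "\<dots> \<le> N / N^2" using rN Np by (intro divide_right_mono) auto
    also have "\<dots> = 1 / N" using Np by (simp add: power2_eq_square)
    finally show ?thesis .
  qed
  show ?thesis unfolding eq using t1 t2 abs_triangle_ineq[of "(\<beta> * E1 + (r - \<beta>) * E2) / D" "r * s2 * (a2 - D) / (D * a2)"]
    by (simp add: field_simps)
qed

lemma sin_sq_diff: fixes a b :: real shows "sin a ^ 2 - sin b ^ 2 = sin (a + b) * sin (a - b)"
proof -
  have "sin (a + b) * sin (a - b) = (sin a * cos b)^2 - (cos a * sin b)^2"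
    by (simp add: sin_add sin_diff power2_eq_square algebra_simps)
  also have "\<dots> = sin a ^ 2 * (1 - sin b ^ 2) - (1 - sin a ^ 2) * sin b ^ 2"
    by (simp add: power_mult_distrib cos_squared_eq)
  finally show ?thesis by (simp add: algebra_simps)
qed

lemma sin_sq_shift: fixes z :: real and t :: int shows "sin (z + of_int t * pi) ^ 2 = sin z ^ 2"
proof -
  have s0: "sin (of_int t * pi) = 0" using sin_zero_iff_int2 by blast
  then have c1: "cos (of_int t * pi) ^ 2 = 1" using sin_cos_squared_add[of "of_int t * pi"] by simp
  have "sin (z + of_int t * pi) = sin z * cos (of_int t * pi)" by (simp add: sin_add s0)
  then show ?thesis by (simp add: power_mult_distrib c1)
qed

lemma half_angle: fixes z :: real shows "1 - cos (2 * z) = 2 * sin z ^ 2"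
  by (simp add: cos_double_sin)

lemma cos_lb0: fixes z :: real assumes "z \<ge> 0" shows "cos z \<ge> 1 - z^2/2"
proof -
  let ?f = "\<lambda>x. cos x - 1 + x^2/2"
  have "?f 0 \<le> ?f z"
  proof (rule DERIV_nonneg_imp_nondecreasing[OF assms])
    fix x :: real assume "0 \<le> x" "x \<le> z"
    then show "\<exists>y. DERIV ?f x :> y \<and> y \<ge> 0"
      by (intro exI[of _ "x - sin x"]) (auto intro!: derivative_eq_intros simp: sin_x_le_x)
  qed
  then show ?thesis by simp
qed

lemma cos_lb: fixes z :: real shows "cos z \<ge> 1 - z^2/2"
  using cos_lb0[of z] cos_lb0[of "-z"] by (cases "z \<ge> 0") auto

lemma sin_lb: fixes z :: real assumes "z \<ge> 0" shows "sin z \<ge> z - z^3/6"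
proof -
  let ?f = "\<lambda>x. sin x - x + x^3/6"
  have "?f 0 \<le> ?f z"
  proof (rule DERIV_nonneg_imp_nondecreasing[OF assms])
    fix x :: real assume "0 \<le> x" "x \<le> z"
    then show "\<exists>y. DERIV ?f x :> y \<and> y \<ge> 0"
      using cos_lb[of x]
      by (intro exI[of _ "cos x - 1 + x^2/2"]) (auto intro!: derivative_eq_intros simp: power2_eq_square power3_eq_cube)
  qed
  then show ?thesis by simp
qed

lemma sin_sq_bounds0:
  fixes z :: real assumes "0 \<le> z" "z \<le> pi/2"
  shows "(sin z)^2 \<ge> z^2/3" "z^2 - (sin z)^2 \<le> z^4/3" "(sin z)^2 \<le> z^2"
proof -
  have "z \<le> 1.58" using assms pi_approx by simp
  then have "z^2 \<le> 1.58^2" using assms by (intro power_mono) auto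
  then have z2: "z^2 \<le> 2.5" by (simp add: power2_eq_square)
  have l: "sin z \<ge> z - z^3/6" using sin_lb assms by simp
  have u: "sin z \<le> z" using sin_x_le_x assms by simp
  have p: "z - z^3/6 \<ge> 0"
  proof -
    have "z^3/6 = z * (z^2/6)" by (simp add: power2_eq_square power3_eq_cube)
    also have "\<dots> \<le> z * 1" using z2 assms by (intro mult_left_mono) auto
    finally show ?thesis by simp
  qed
  have sq: "(sin z)^2 \<ge> (z - z^3/6)^2" using l p by (intro power_mono) auto
  have "(z - z^3/6)^2 = z^2 * (1 - z^2/6)^2" by (simp add: power2_eq_square power3_eq_cube algebra_simps)
  also have "\<dots> \<ge> z^2 * (1/3)"
  proof (rule mult_left_mono)
    have "1 - z^2/6 \<ge> 29/50" using z2 by simp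
    then have "(1 - z^2/6)^2 \<ge> (29/50)^2" by (intro power_mono) auto
    moreover have "(29/50::real)^2 = 841/2500" by (simp add: power2_eq_square)
    ultimately show "(1 - z^2/6)^2 \<ge> 1/3" by linarith
  qed simp
  finally show "(sin z)^2 \<ge> z^2/3" using sq by simp
  have z6: "0 \<le> z * (z * (z * (z * (z * z))))" using assms by simp
  have "(z - z^3/6)^2 \<ge> z^2 - z^4/3"
    using z6 by (simp add: power2_eq_square power3_eq_cube power4_eq_xxxx algebra_simps)
  then show "z^2 - (sin z)^2 \<le> z^4/3" using sq by simp
  show "(sin z)^2 \<le> z^2" using u assms sin_ge_zero[of z] by (intro power_mono) auto
qed

lemma sin_sq_bounds:
  fixes z :: real assumes "\<bar>z\<bar> \<le> pi/2"
  shows "(sin z)^2 \<ge> z^2/3" "z^2 - (sin z)^2 \<le> z^4/3" "(sin z)^2 \<le> z^2"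
  using sin_sq_bounds0[of "\<bar>z\<bar>"] assms
  by (cases "z \<ge> 0"; simp)+

lemma sin_prod_bound: fixes p q :: real shows "\<bar>sin p * sin q\<bar> \<le> \<bar>p\<bar> * \<bar>q\<bar>"
  by (simp add: abs_mult abs_sin_x_le_abs_x mult_mono)

lemma alg1: fixes A r N c :: real assumes "r \<noteq> 0" "N \<noteq> 0"
  shows "(3 * (pi * A / r)) * (pi * A * c / (r * N)) = 3 * (pi^2 * A^2) * c / (r^2 * N)"
  using assms by (simp add: field_simps power2_eq_square)

lemma term_bound:
  fixes r N \<beta> L \<alpha>0 :: real and t :: int
  assumes r: "0 < r" "r \<le> N" and rel: "r * L + \<beta> = N" and b: "0 \<le> \<beta>" "\<beta> < r"
    and a0: "\<bar>\<alpha>0\<bar> \<le> r / 2" "\<alpha>0 \<noteq> 0" and aN: "\<bar>\<alpha>0 + r * of_int t\<bar> \<le> N / 2"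
  shows "\<bar>\<beta> / N^2 * ((1 - cos (2 * pi * (\<alpha>0 + r * of_int t) * (L + 1) / N)) / (1 - cos (2 * pi * (\<alpha>0 + r * of_int t) / N)))
        + (r - \<beta>) / N^2 * ((1 - cos (2 * pi * (\<alpha>0 + r * of_int t) * L / N)) / (1 - cos (2 * pi * (\<alpha>0 + r * of_int t) / N)))
        - sin (pi * (\<alpha>0 / r)) ^ 2 / (pi^2 * r * (\<alpha>0 / r + of_int t)^2)\<bar> \<le> 11 / (2 * N)"
proof -
  define \<alpha> where "\<alpha> = \<alpha>0 + r * of_int t"
  define \<theta> where "\<theta> = pi * \<alpha> / N"
  define u where "u = pi * (\<alpha>0 / r)"
  define \<delta> where "\<delta> = pi * \<beta> * \<alpha> / (r * N)"
  define a2 where "a2 = pi^2 * \<alpha>^2"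
  define D where "D = N^2 * sin \<theta> ^ 2"
  define s2 where "s2 = sin u ^ 2"
  have Np: "N > 0" using r by linarith
  have a0a: "\<bar>\<alpha>0\<bar> \<le> \<bar>\<alpha>\<bar>"
  proof (cases "t = 0")
    case True then show ?thesis by (simp add: \<alpha>_def)
  next
    case False
    then have "1 \<le> \<bar>of_int t :: real\<bar>" by linarith
    then have "r \<le> \<bar>r * of_int t\<bar>" using r by (simp add: abs_mult)
    then show ?thesis unfolding \<alpha>_def using a0 by linarith
  qed
  have ane: "\<alpha> \<noteq> 0" using a0a a0 by auto
  have a2p: "a2 > 0" using ane by (simp add: a2_def)
  have th: "\<bar>\<theta>\<bar> \<le> pi / 2"
  proof -
    have "\<bar>\<theta>\<bar> = pi * (\<bar>\<alpha>\<bar> / N)" using Np by (simp add: \<theta>_def abs_mult)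
    also have "\<dots> \<le> pi * (1/2)" using aN Np unfolding \<alpha>_def by (intro mult_left_mono) (auto simp: field_simps)
    finally show ?thesis by simp
  qed
  have Na: "N^2 * \<theta>^2 = a2" using Np by (simp add: \<theta>_def a2_def power_divide power_mult_distrib)
  have D1: "D \<ge> a2 / 3"
  proof -
    have "N^2 * (\<theta>^2/3) \<le> N^2 * sin \<theta> ^ 2" using sin_sq_bounds(1)[OF th] by (intro mult_left_mono) auto
    then show ?thesis using Na by (simp add: D_def)
  qed
  have D3: "D \<le> a2"
  proof -
    have "N^2 * sin \<theta> ^ 2 \<le> N^2 * \<theta>^2" using sin_sq_bounds(3)[OF th] by (intro mult_left_mono) auto
    then show ?thesis using Na by (simp add: D_def)
  qed
  have D2: "a2 - D \<le> a2^2 / (3 * N^2)"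
  proof -
    have "N^2 * (\<theta>^2 - sin \<theta> ^ 2) \<le> N^2 * (\<theta>^4/3)" using sin_sq_bounds(2)[OF th] by (intro mult_left_mono) auto
    also have "N^2 * (\<theta>^4/3) = a2^2 / (3 * N^2)" using Np Na[symmetric]
      by (simp add: field_simps power2_eq_square power4_eq_xxxx)
    finally show ?thesis using Na by (simp add: D_def algebra_simps)
  qed
  have sth: "sin \<theta> \<noteq> 0" using D1 a2p by (auto simp: D_def)
  have Lth: "L * \<theta> = (u - \<delta>) + of_int t * pi"
  proof -
    have L: "L = (N - \<beta>) / r" using rel r by (simp add: field_simps)
    show ?thesis unfolding L \<theta>_def u_def \<delta>_def \<alpha>_def using r Np by (simp add: field_simps)
  qed
  have L1th: "(L + 1) * \<theta> = (u - \<delta> + \<theta>) + of_int t * pi" using Lth by (simp add: algebra_simps)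
  have c1: "1 - cos (2 * pi * \<alpha> * (L + 1) / N) = 2 * sin (u - \<delta> + \<theta>) ^ 2"
  proof -
    have arg: "2 * pi * \<alpha> * (L + 1) / N = 2 * ((L + 1) * \<theta>)" by (simp add: \<theta>_def)
    show ?thesis by (simp only: arg half_angle L1th sin_sq_shift)
  qed
  have c2: "1 - cos (2 * pi * \<alpha> * L / N) = 2 * sin (u - \<delta>) ^ 2"
  proof -
    have arg: "2 * pi * \<alpha> * L / N = 2 * (L * \<theta>)" by (simp add: \<theta>_def)
    show ?thesis by (simp only: arg half_angle Lth sin_sq_shift)
  qed
  have c0: "1 - cos (2 * pi * \<alpha> / N) = 2 * sin \<theta> ^ 2"
  proof -
    have arg: "2 * pi * \<alpha> / N = 2 * \<theta>" by (simp add: \<theta>_def)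
    show ?thesis by (simp only: arg half_angle)
  qed
  define E1 where "E1 = sin (u - \<delta> + \<theta>) ^ 2 - s2"
  define E2 where "E2 = sin (u - \<delta>) ^ 2 - s2"
  have Pe: "\<beta> / N^2 * ((1 - cos (2 * pi * \<alpha> * (L + 1) / N)) / (1 - cos (2 * pi * \<alpha> / N)))
        + (r - \<beta>) / N^2 * ((1 - cos (2 * pi * \<alpha> * L / N)) / (1 - cos (2 * pi * \<alpha> / N)))
        = (\<beta> * (s2 + E1) + (r - \<beta>) * (s2 + E2)) / D"
    unfolding c0 c1 c2 E1_def E2_def D_def using sth Np by (simp add: field_simps)
  have main: "sin (pi * (\<alpha>0 / r)) ^ 2 / (pi^2 * r * (\<alpha>0 / r + of_int t)^2) = r * s2 / a2"
  proof -
    have "\<alpha> = r * (\<alpha>0 / r + of_int t)" using r by (simp add: \<alpha>_def field_simps)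
    then have "a2 = r * (pi^2 * r * (\<alpha>0 / r + of_int t)^2)" by (simp add: a2_def power_mult_distrib power2_eq_square)
    moreover have "sin (pi * (\<alpha>0 / r)) ^ 2 = s2" by (simp add: s2_def u_def)
    ultimately show ?thesis using r by simp
  qed
  have ua: "\<bar>u\<bar> \<le> pi * \<bar>\<alpha>\<bar> / r" using a0a r by (simp add: u_def abs_mult divide_right_mono)
  have td: "\<theta> - \<delta> = pi * \<alpha> * (r - \<beta>) / (r * N)" using r Np by (simp add: \<theta>_def \<delta>_def field_simps)
  have tda: "\<bar>\<theta> - \<delta>\<bar> = pi * \<bar>\<alpha>\<bar> * (r - \<beta>) / (r * N)" using r Np b by (simp add: td abs_mult)
  have tdb: "\<bar>\<theta> - \<delta>\<bar> \<le> pi * \<bar>\<alpha>\<bar> / r"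
  proof -
    have "(r - \<beta>) / N \<le> 1" using r b by simp
    then have "pi * \<bar>\<alpha>\<bar> / r * ((r - \<beta>) / N) \<le> pi * \<bar>\<alpha>\<bar> / r * 1" using r by (intro mult_left_mono) auto
    then show ?thesis unfolding tda by (simp add: field_simps)
  qed
  have da: "\<bar>\<delta>\<bar> = pi * \<bar>\<alpha>\<bar> * \<beta> / (r * N)" using r Np b by (simp add: \<delta>_def abs_mult)
  have db: "\<bar>\<delta>\<bar> \<le> pi * \<bar>\<alpha>\<bar> / r"
  proof -
    have "\<beta> / N \<le> 1" using r b by simp
    then have "pi * \<bar>\<alpha>\<bar> / r * (\<beta> / N) \<le> pi * \<bar>\<alpha>\<bar> / r * 1" using r by (intro mult_left_mono) auto
    then show ?thesis unfolding da by (simp add: field_simps)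
  qed
  have a2a: "a2 = pi^2 * \<bar>\<alpha>\<bar>^2" by (simp add: a2_def)
  have E1b: "\<bar>E1\<bar> \<le> 3 * a2 * (r - \<beta>) / (r^2 * N)"
  proof -
    have "E1 = sin ((u - \<delta> + \<theta>) + u) * sin ((u - \<delta> + \<theta>) - u)" unfolding E1_def s2_def by (rule sin_sq_diff)
    then have "\<bar>E1\<bar> \<le> \<bar>(u - \<delta> + \<theta>) + u\<bar> * \<bar>\<theta> - \<delta>\<bar>" using sin_prod_bound by simp
    also have "\<dots> \<le> (3 * (pi * \<bar>\<alpha>\<bar> / r)) * \<bar>\<theta> - \<delta>\<bar>"
      using ua tdb by (intro mult_right_mono) auto
    also have "\<dots> = 3 * a2 * (r - \<beta>) / (r^2 * N)" unfolding tda a2a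
      by (rule alg1) (use r Np in auto)
    finally show ?thesis .
  qed
  have E2b: "\<bar>E2\<bar> \<le> 3 * a2 * \<beta> / (r^2 * N)"
  proof -
    have "E2 = sin ((u - \<delta>) + u) * sin ((u - \<delta>) - u)" unfolding E2_def s2_def by (rule sin_sq_diff)
    then have "\<bar>E2\<bar> \<le> \<bar>(u - \<delta>) + u\<bar> * \<bar>\<delta>\<bar>" using sin_prod_bound[of "(u - \<delta>) + u" "(u - \<delta>) - u"] by simp
    also have "\<dots> \<le> (3 * (pi * \<bar>\<alpha>\<bar> / r)) * \<bar>\<delta>\<bar>"
      using ua db by (intro mult_right_mono) auto
    also have "\<dots> = 3 * a2 * \<beta> / (r^2 * N)" unfolding da a2a
      by (rule alg1) (use r Np in auto)
    finally show ?thesis .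
  qed
  have s2b: "0 \<le> s2" "s2 \<le> 1" unfolding s2_def
  proof -
    show "0 \<le> sin u ^ 2" by simp
    have "sin u ^ 2 + cos u ^ 2 = 1" by (rule sin_cos_squared_add)
    moreover have "0 \<le> cos u ^ 2" by simp
    ultimately show "sin u ^ 2 \<le> 1" by linarith
  qed
  have "\<bar>(\<beta> * (s2 + E1) + (r - \<beta>) * (s2 + E2)) / D - r * s2 / a2\<bar> \<le> 11 / (2 * N)"
    by (rule core[OF E1b E2b D1 D2 D3 s2b]) (use b r a2p in auto)
  then show ?thesis using Pe main unfolding \<alpha>_def by simp
qed

lemma Q_sym: fixes x :: real
  shows "(\<Sum>t = -int n..int n. 1 / (x + of_int t)^2) = (\<Sum>t = -int n..int n. 1 / (\<bar>x\<bar> + of_int t)^2)"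
proof (cases "x \<ge> 0")
  case True then show ?thesis by simp
next
  case False
  have "(\<Sum>t = -int n..int n. 1 / (x + of_int t)^2) = (\<Sum>t = -int n..int n. 1 / (x + of_int (- t))^2)"
    by (rule sum.reindex_bij_witness[of _ uminus uminus]) auto
  also have "\<dots> = (\<Sum>t = -int n..int n. 1 / (\<bar>x\<bar> + of_int t)^2)"
  proof (rule sum.cong[OF refl])
    fix t assume "t \<in> {-int n..int n}"
    have "(x + of_int (- t))^2 = (\<bar>x\<bar> + of_int t)^2" using False by (simp add: power2_eq_square algebra_simps)
    then show "1 / (x + of_int (- t))^2 = 1 / (\<bar>x\<bar> + of_int t)^2" by simp
  qed
  finally show ?thesis .
qed

lemma Q_bounds:
  fixes x :: real and n :: nat
  assumes "x \<noteq> 0" "\<bar>x\<bar> \<le> 1/2" "n \<ge> 1"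
  shows "(\<Sum>t = -int n..int n. 1 / (x + of_int t)^2) \<le> pi^2 / (sin (pi*x))^2"
    "pi^2 / (sin (pi*x))^2 - (\<Sum>t = -int n..int n. 1 / (x + of_int t)^2) \<le> 2 / real n"
    "(sin (pi*x))^2 > 0" "(sin (pi*x))^2 \<le> 1"
proof -
  have y: "0 < \<bar>x\<bar>" "\<bar>x\<bar> < 1" "\<bar>x\<bar> \<le> 1/2" using assms by auto
  have s: "(sin (pi*x))^2 = (sin (pi*\<bar>x\<bar>))^2"
    by (cases "x \<ge> 0") (simp_all add: power2_eq_square)
  show "(\<Sum>t = -int n..int n. 1 / (x + of_int t)^2) \<le> pi^2 / (sin (pi*x))^2"
    using upper_bound[OF y(1,2), of n] Q_sym[of x n] s by simp
  show "pi^2 / (sin (pi*x))^2 - (\<Sum>t = -int n..int n. 1 / (x + of_int t)^2) \<le> 2 / real n"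
    using lower_bound[OF y(1,3) assms(3)] Q_sym[of x n] s by simp
  have "sin (pi * \<bar>x\<bar>) > 0" using y by (intro sin_gt_zero) auto
  then show "(sin (pi*x))^2 > 0" unfolding s by simp
  have "sin (pi*x) ^ 2 + cos (pi*x) ^ 2 = 1" by (rule sin_cos_squared_add)
  moreover have "0 \<le> cos (pi*x) ^ 2" by simp
  ultimately show "(sin (pi*x))^2 \<le> 1" by linarith
qed

theorem theorem1:
  fixes r m l :: nat and \<alpha>0 :: real and B :: int
  assumes "r \<ge> 2" and "m > 0" and "l > 0" and "r < 2 ^ m"
    and "\<alpha>0 \<noteq> 0" and "- real r / 2 < \<alpha>0" and "\<alpha>0 \<le> real r / 2"
    and "1 \<le> B" and "real_of_int B < ((2::real) ^ (m + l) / real r - 1) / 2"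
  shows "\<exists>\<epsilon>R \<epsilon>A.
     (\<Sum>t = -B..B. qpe_P r m l (\<alpha>0 + real r * real_of_int t))
        = 1 / real r * (1 - \<epsilon>R) + \<epsilon>A
     \<and> 0 \<le> \<epsilon>R
     \<and> \<epsilon>R \<le> 1 / pi\<^sup>2 * (2 / real_of_int B + 1 / (real_of_int B)\<^sup>2 + 1 / (3 * (real_of_int B) ^ 3))
     \<and> \<bar>\<epsilon>A\<bar> \<le> (2 * real_of_int B + 1) *
          (pi\<^sup>2 / 2 ^ (m + l) * (3 / 4 + real r / 2 ^ (m + l) * (1 / 12)))"
proof -
  define n where "n = nat B"
  have Bn: "B = int n" and n1: "n \<ge> 1" using assms(8) by (auto simp: n_def)
  define N :: real where "N = 2 ^ (m + l)"
  define \<beta> where "\<beta> = real (qpe_beta r m l)"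
  define L where "L = real (qpe_L r m l)"
  define x where "x = \<alpha>0 / real r"
  define s2 where "s2 = (sin (pi * x))^2"
  define Q where "Q = (\<Sum>t = -int n..int n. 1 / (x + of_int t)^2)"
  define S where "S = (\<Sum>t = -B..B. qpe_P r m l (\<alpha>0 + real r * real_of_int t))"
  define M where "M t = s2 / (pi^2 * real r * (x + of_int t)^2)" for t :: int
  have rpos: "real r > 0" using assms(1) by simp
  have Np: "N > 0" by (simp add: N_def)
  have rel: "real r * L + \<beta> = N"
  proof -
    have "real (r * (2 ^ (m + l) div r) + 2 ^ (m + l) mod r) = real ((2::nat) ^ (m + l))" by (simp only: mult_div_mod_eq)
    then show ?thesis unfolding L_def \<beta>_def N_def qpe_L_def qpe_beta_def
      by (simp only: of_nat_add of_nat_mult of_nat_power of_nat_numeral)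
  qed
  have b: "0 \<le> \<beta>" "\<beta> < real r" using assms(1) by (auto simp: \<beta>_def qpe_beta_def)
  have rN: "real r \<le> N"
  proof -
    have "(2::nat) ^ m \<le> 2 ^ (m + l)" by (rule power_increasing) auto
    then have "r < 2 ^ (m + l)" using assms(4) by linarith
    then have "real r < real (2 ^ (m + l))" by (simp only: of_nat_less_iff)
    then show ?thesis by (simp add: N_def)
  qed
  have a0: "\<bar>\<alpha>0\<bar> \<le> real r / 2" using assms(6,7) by auto
  have BN: "real r * (2 * real n + 1) < N"
  proof -
    have "2 * real n + 1 < N / real r" using assms(9) Bn by (simp add: N_def)
    then show ?thesis using rpos by (simp add: field_simps)
  qed
  have aN: "\<bar>\<alpha>0 + real r * of_int t\<bar> \<le> N / 2" if "t \<in> {-B..B}" for t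
  proof -
    have "\<bar>of_int t :: real\<bar> \<le> real n" using that Bn by auto
    then have "\<bar>real r * of_int t\<bar> \<le> real r * real n" using rpos by (simp add: abs_mult)
    moreover have "real r * (2 * real n + 1) = 2 * (real r * real n) + real r" by (simp add: algebra_simps)
    ultimately show ?thesis using a0 BN abs_triangle_ineq[of \<alpha>0 "real r * of_int t"] by linarith
  qed
  have xb: "x \<noteq> 0" "\<bar>x\<bar> \<le> 1/2" using assms(5) a0 rpos by (auto simp: x_def field_simps)
  note QB = Q_bounds[OF xb n1]
  have per: "\<bar>qpe_P r m l (\<alpha>0 + real r * real_of_int t) - M t\<bar> \<le> 11 / (2 * N)" if "t \<in> {-B..B}" for t
  proof -
    have "\<bar>\<beta> / N^2 * ((1 - cos (2 * pi * (\<alpha>0 + real r * of_int t) * (L + 1) / N)) / (1 - cos (2 * pi * (\<alpha>0 + real r * of_int t) / N)))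
        + (real r - \<beta>) / N^2 * ((1 - cos (2 * pi * (\<alpha>0 + real r * of_int t) * L / N)) / (1 - cos (2 * pi * (\<alpha>0 + real r * of_int t) / N)))
        - sin (pi * (\<alpha>0 / real r)) ^ 2 / (pi^2 * real r * (\<alpha>0 / real r + of_int t)^2)\<bar> \<le> 11 / (2 * N)"
      by (rule term_bound[OF rpos rN rel b a0 assms(5) aN[OF that]])
    then show ?thesis unfolding qpe_P_def Let_def M_def s2_def x_def N_def[symmetric] \<beta>_def[symmetric] L_def[symmetric] .
  qed
  have sumM: "(\<Sum>t = -B..B. M t) = s2 / (pi^2 * real r) * Q"
    unfolding Q_def M_def Bn sum_distrib_left by (rule sum.cong) auto
  define eR where "eR = 1 - s2 * Q / pi^2"
  define eA where "eA = S - (\<Sum>t = -B..B. M t)"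
  have eq: "S = 1 / real r * (1 - eR) + eA"
    unfolding eA_def eR_def sumM using rpos by (simp add: field_simps)
  have s2p: "s2 > 0" "s2 \<le> 1" using QB(3,4) by (simp_all add: s2_def)
  have pi2: "pi^2 > 0" by simp
  have eR0: "0 \<le> eR"
  proof -
    have "Q \<le> pi^2 / s2" using QB(1) by (simp add: Q_def s2_def)
    then have "s2 * Q \<le> pi^2" using s2p by (simp add: field_simps)
    then show ?thesis unfolding eR_def using pi2 by (simp add: field_simps)
  qed
  have eR1: "eR \<le> 1 / pi\<^sup>2 * (2 / real_of_int B + 1 / (real_of_int B)\<^sup>2 + 1 / (3 * (real_of_int B) ^ 3))"
  proof -
    have g: "pi^2 / s2 - Q \<le> 2 / real n" using QB(2) by (simp add: Q_def s2_def)
    have g0: "0 \<le> pi^2 / s2 - Q" using QB(1) by (simp add: Q_def s2_def)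
    have "eR = s2 * (pi^2 / s2 - Q) / pi^2" unfolding eR_def using s2p pi2 by (simp add: field_simps)
    also have "\<dots> \<le> 1 * (2 / real n) / pi^2"
      using s2p g g0 pi2 by (intro divide_right_mono mult_mono) auto
    also have "\<dots> \<le> 1 / pi\<^sup>2 * (2 / real_of_int B + 1 / (real_of_int B)\<^sup>2 + 1 / (3 * (real_of_int B) ^ 3))"
      using n1 Bn pi2 by (simp add: field_simps)
    finally show ?thesis .
  qed
  have eA1: "\<bar>eA\<bar> \<le> (2 * real_of_int B + 1) * (pi\<^sup>2 / 2 ^ (m + l) * (3 / 4 + real r / 2 ^ (m + l) * (1 / 12)))"
  proof -
    define eps where "eps = pi\<^sup>2 / 2 ^ (m + l) * (3 / 4 + real r / 2 ^ (m + l) * (1 / 12))"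
    have c: "real (card {-B..B}) = 2 * real_of_int B + 1" using assms(8) by simp
    have "\<bar>eA\<bar> = \<bar>\<Sum>t = -B..B. qpe_P r m l (\<alpha>0 + real r * real_of_int t) - M t\<bar>"
      unfolding eA_def S_def by (simp add: sum_subtractf)
    also have "\<dots> \<le> (\<Sum>t = -B..B. \<bar>qpe_P r m l (\<alpha>0 + real r * real_of_int t) - M t\<bar>)" by (rule sum_abs)
    also have "\<dots> \<le> real (card {-B..B}) * (11 / (2 * N))" by (rule sum_bounded_above) (use per in auto)
    finally have h1: "\<bar>eA\<bar> \<le> (2 * real_of_int B + 1) * (11 / (2 * N))" unfolding c .
    have h2: "11 / (2 * N) \<le> eps"
    proof -
      have "3 * 3 \<le> pi * pi" using pi_gt3 by (intro mult_mono) auto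
      then have p3: "pi\<^sup>2 \<ge> 9" by (simp add: power2_eq_square)
      have "11 / (2 * N) \<le> pi\<^sup>2 / N * (3 / 4)" using p3 Np by (simp add: field_simps)
      also have "\<dots> \<le> pi\<^sup>2 / N * (3 / 4 + real r / N * (1 / 12))" using Np by (intro mult_left_mono) auto
      finally show ?thesis by (simp add: N_def eps_def)
    qed
    have "(2 * real_of_int B + 1) * (11 / (2 * N)) \<le> (2 * real_of_int B + 1) * eps"
      using h2 assms(8) by (intro mult_left_mono) auto
    then show ?thesis using h1 unfolding eps_def by linarith
  qed
  show ?thesis using eq eR0 eR1 eA1 unfolding S_def by blast
qed

end
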